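(* Let $f,w\colon\mathbb{R}^d\to[0,\infty)$ be two proper log-concave functions such that the support of $w$ is bounded. Then there exists a solution $\tilde g$ to the problem of maximizing $\int_{\mathbb{R}^d} g$ over all positions $g$ of $w$ subject to $g\le f$, and $\tilde g$ satisfies \[ \|\tilde g\|_\infty \le \|f\|_\infty \le e^d\,\|\tilde g\|_\infty. \]
   Context: A function $\mathbb{R}^d\to[0,\infty)$ is proper log-concave if it is upper semi-continuous, log-concave, and has finite positive integral. The support of $w$ is $\{x: w(x)>0\}$. The positions of $w$ are the functions $x\mapsto\alpha\, w(Ax+a)$ with $A$ a non-singular real $d\times d$ matrix, $\alpha>0$, $a\in\mathbb{R}^d$. $g\le f$ means pointwise inequality. $\|\cdot\|_\infty$ is the supremum norm. *)

theory Defs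
  imports "HOL-Analysis.Analysis"
begin

text \<open>Functions on R^d are modelled as functions on real^'n, with d = CARD('n).\<close>

definition upper_semicont :: "(real^'n \<Rightarrow> real) \<Rightarrow> bool" where
  "upper_semicont f \<longleftrightarrow> (\<forall>c. closed {x. c \<le> f x})"

definition log_concave :: "(real^'n \<Rightarrow> real) \<Rightarrow> bool" where
  "log_concave f \<longleftrightarrow> (\<forall>x. 0 \<le> f x) \<and>
     (\<forall>x y. \<forall>t::real. 0 < t \<and> t < 1 \<longrightarrow>
        f x powr (1 - t) * f y powr t \<le> f ((1 - t) *\<^sub>R x + t *\<^sub>R y))"

definition proper_log_concave :: "(real^'n \<Rightarrow> real) \<Rightarrow> bool" where
  "proper_log_concave f \<longleftrightarrow> upper_semicont f \<and> log_concave f \<and>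
     f integrable_on UNIV \<and> integral UNIV f > 0"

definition support_of :: "(real^'n \<Rightarrow> real) \<Rightarrow> (real^'n) set" where
  "support_of w = {x. w x > 0}"

definition positions :: "(real^'n \<Rightarrow> real) \<Rightarrow> (real^'n \<Rightarrow> real) set" where
  "positions w = {(\<lambda>x. \<alpha> * w (A *v x + a)) | A \<alpha> a.
      invertible (A :: real^'n^'n) \<and> \<alpha> > 0}"

definition sup_norm :: "(real^'n \<Rightarrow> real) \<Rightarrow> real" where
  "sup_norm f = (SUP x. \<bar>f x\<bar>)"

end

theory Submission
  imports Defs "HOL-Library.Countable"
begin


typedef 'n wo = "UNIV :: 'n set" by simp

instance wo :: (finite) finite
proof
  have "(UNIV :: 'a wo set) = range Abs_wo" by (metis Abs_wo_cases surj_def UNIV_eq_I rangeI)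
  then show "finite (UNIV :: 'a wo set)" by (metis finite finite_imageI)
qed

instantiation wo :: (finite) linorder
begin
definition less_eq_wo :: "'a wo \<Rightarrow> 'a wo \<Rightarrow> bool" where
  "less_eq_wo x y \<longleftrightarrow> to_nat (Rep_wo x) \<le> to_nat (Rep_wo y)"
definition less_wo :: "'a wo \<Rightarrow> 'a wo \<Rightarrow> bool" where
  "less_wo x y \<longleftrightarrow> to_nat (Rep_wo x) < to_nat (Rep_wo y)"
instance
proof
  fix x y z :: "'a wo"
  show "(x < y) = (x \<le> y \<and> \<not> y \<le> x)" by (auto simp: less_eq_wo_def less_wo_def)
  show "x \<le> x" by (simp add: less_eq_wo_def)
  show "x \<le> y \<Longrightarrow> y \<le> z \<Longrightarrow> x \<le> z" by (auto simp: less_eq_wo_def)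
  show "x \<le> y \<Longrightarrow> y \<le> x \<Longrightarrow> x = y"
    by (auto simp: less_eq_wo_def Rep_wo_inject[symmetric])
  show "x \<le> y \<or> y \<le> x" by (auto simp: less_eq_wo_def)
qed
end

instance wo :: (finite) wellorder
proof
  fix P :: "'a wo \<Rightarrow> bool" and a
  assume H: "\<And>x. (\<And>y. y < x \<Longrightarrow> P y) \<Longrightarrow> P x"
  show "P a"
  proof (induction "to_nat (Rep_wo a)" arbitrary: a rule: less_induct)
    case less
    then show ?case using H by (auto simp: less_wo_def)
  qed
qed

definition phi :: "real^'n \<Rightarrow> real^('n wo)" where
  "phi x = (\<chi> i. x $ Rep_wo i)"
definition psi :: "real^('n wo) \<Rightarrow> real^'n" where
  "psi y = (\<chi> k. y $ Abs_wo k)"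

lemma phi_psi[simp]: "phi (psi y) = y" by (simp add: phi_def psi_def Rep_wo_inverse vec_eq_iff)
lemma psi_phi[simp]: "psi (phi x) = x" by (simp add: phi_def psi_def Abs_wo_inverse vec_eq_iff)

lemma linear_phi: "linear phi"
  by (auto simp: linear_iff phi_def vec_eq_iff)
lemma linear_psi: "linear psi"
  by (auto simp: linear_iff psi_def vec_eq_iff)

lemma meas_phi[measurable]: "phi \<in> borel_measurable borel"
  by (intro borel_measurable_continuous_onI linear_continuous_on) (simp add: linear_conv_bounded_linear[symmetric] linear_phi)
lemma meas_psi[measurable]: "psi \<in> borel_measurable borel"
  by (intro borel_measurable_continuous_onI linear_continuous_on) (simp add: linear_conv_bounded_linear[symmetric] linear_psi)

lemma emeasure_box_content:
  fixes l u :: "'a::euclidean_space"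
  assumes "\<And>b. b \<in> Basis \<Longrightarrow> l \<bullet> b \<le> u \<bullet> b"
  shows "emeasure lborel (box l u) = ennreal (measure lborel (cbox l u))"
  using assms by (simp add: emeasure_lborel_box_eq content_cbox)

lemma bij_Abs_wo: "bij_betw Abs_wo (UNIV::'n set) UNIV"
  by (metis Abs_wo_inject UNIV_I bij_betw_def inj_onI Abs_wo_cases surjI type_definition.Abs_image type_definition_wo)

lemma prod_cart_eq:
  fixes l u :: "real^('n::finite wo)"
  shows "(\<Prod>k\<in>(UNIV::'n set). u $ Abs_wo k - l $ Abs_wo k) = (\<Prod>i\<in>UNIV. u $ i - l $ i)"
  using prod.reindex_bij_betw[OF bij_Abs_wo, of "\<lambda>i. u $ i - l $ i"] by simp

lemma all_Rep_wo: "(\<forall>i. P (Rep_wo i)) \<longleftrightarrow> (\<forall>k. P k)"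
  by (metis Abs_wo_inverse UNIV_I)

lemma content_cbox_le_cart:
  fixes l u :: "real^'n"
  assumes "\<And>i. l $ i \<le> u $ i"
  shows "measure lborel (cbox l u) = (\<Prod>i\<in>UNIV. u $ i - l $ i)"
  using assms by (intro content_cbox_cart) (auto simp: interval_eq_empty_cart not_less)

lemma distr_phi: "distr lborel borel (phi::real^'n::finite \<Rightarrow> real^'n wo) = lborel"
proof (rule lborel_eqI[symmetric])
  fix l u :: "real^'n wo"
  assume lu: "\<And>b. b\<in>Basis \<Longrightarrow> l\<bullet>b \<le> u\<bullet>b"
  have le: "l $ i \<le> u $ i" for i using lu[of "axis i 1"] by (simp add: inner_axis)
  have pre: "phi -` box l u = box (psi l) (psi u)"
  proof (rule set_eqI)
    fix x :: "real^'n"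
    have "(\<forall>i. l $ i < x $ Rep_wo i \<and> x $ Rep_wo i < u $ i) \<longleftrightarrow>
          (\<forall>i. l $ Abs_wo (Rep_wo i) < x $ Rep_wo i \<and> x $ Rep_wo i < u $ Abs_wo (Rep_wo i))"
      by (simp add: Rep_wo_inverse)
    also have "\<dots> \<longleftrightarrow> (\<forall>k. l $ Abs_wo k < x $ k \<and> x $ k < u $ Abs_wo k)"
      by (rule all_Rep_wo)
    finally show "x \<in> phi -` box l u \<longleftrightarrow> x \<in> box (psi l) (psi u)"
      by (simp add: mem_box_cart phi_def psi_def)
  qed
  have "emeasure (distr lborel borel phi) (box l u) = emeasure lborel (box (psi l) (psi u))"
    by (simp add: emeasure_distr pre)
  also have "\<dots> = ennreal (measure lborel (cbox (psi l) (psi u)))"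
    using le by (intro emeasure_box_content) (auto simp: Basis_vec_def inner_axis psi_def cart_eq_inner_axis[symmetric])
  also have "\<dots> = ennreal (\<Prod>k\<in>UNIV. psi u $ k - psi l $ k)"
    using le by (subst content_cbox_le_cart) (auto simp: psi_def)
  also have "\<dots> = ennreal (\<Prod>i\<in>UNIV. u $ i - l $ i)"
    using prod_cart_eq[of u l] by (simp add: psi_def)
  also have "\<dots> = ennreal (measure lborel (cbox l u))"
    using le by (simp add: content_cbox_le_cart)
  also have "\<dots> = (\<Prod>b\<in>Basis. (u - l) \<bullet> b)"
    using lu by (simp add: content_cbox prod_nonneg)
  finally show "emeasure (distr lborel borel phi) (box l u) = (\<Prod>b\<in>Basis. (u - l) \<bullet> b)" .
qed simp

lemma distr_psi: "distr lborel borel (psi::real^'n::finite wo \<Rightarrow> real^'n) = lborel"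
proof -
  have "distr lborel borel (psi::real^'n::finite wo \<Rightarrow> real^'n) =
        distr (distr lborel borel (phi::real^'n \<Rightarrow> real^'n wo)) borel psi"
    by (simp add: distr_phi)
  also have "\<dots> = distr lborel borel (psi \<circ> phi)"
    by (rule distr_distr) auto
  also have "psi \<circ> phi = (\<lambda>x::real^'n. x)" by (simp add: o_def)
  also have "distr lborel borel (\<lambda>x::real^'n. x) = lborel"
    by (rule distr_id2) simp
  finally show ?thesis .
qed

lemma has_integral_measure_preserving:
  fixes T :: "'a::euclidean_space \<Rightarrow> 'b::euclidean_space" and h :: "'b \<Rightarrow> real"
  assumes T: "distr lborel borel T = lborel" "T \<in> borel_measurable borel"
    and h: "h \<in> borel_measurable borel" "\<And>x. 0 \<le> h x" and I: "(h has_integral I) UNIV"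
  shows "((\<lambda>x. h (T x)) has_integral I) UNIV"
proof -
  have I0: "0 \<le> I" using has_integral_nonneg[OF I] h(2) by auto
  have "integral\<^sup>N lborel h = I" by (rule nn_integral_has_integral_lborel[OF h I])
  then have "(\<integral>\<^sup>+x. ennreal (h (T x)) \<partial>lborel) = ennreal I"
    using nn_integral_distr[of T lborel borel "\<lambda>x. ennreal (h x)"] T h by simp
  then show ?thesis
    by (intro nn_integral_has_integral) (use T h I0 in auto)
qed

definition conjm :: "real^'n^'n \<Rightarrow> real^('n wo)^('n wo)" where
  "conjm A = (\<chi> i j. A $ Rep_wo i $ Rep_wo j)"

lemma bij_Rep_wo: "bij_betw Rep_wo (UNIV::'n wo set) UNIV"
  by (metis bij_betw_def inj_on_def Rep_wo_inject UNIV_I Abs_wo_inverse surjI)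

lemma sum_Rep_wo: "(\<Sum>j\<in>UNIV. f (Rep_wo j)) = (\<Sum>k\<in>(UNIV::'n::finite set). f k)"
  using sum.reindex_bij_betw[OF bij_Rep_wo, of f] by simp

lemma conjm_mult_vec: "conjm A *v phi x = phi (A *v (x::real^'n::finite))"
  by (simp add: vec_eq_iff conjm_def phi_def matrix_vector_mult_def sum_Rep_wo[of "\<lambda>k. _ $ k * x $ k"])

lemma conjm_mult: "conjm (A ** B) = conjm A ** conjm (B::real^'n::finite^'n)"
  by (simp add: vec_eq_iff conjm_def matrix_matrix_mult_def sum_Rep_wo[of "\<lambda>k. _ $ k * _ $ k $ _"])

lemma conjm_mat: "conjm (mat c :: real^'n::finite^'n) = mat c"
  by (simp add: vec_eq_iff conjm_def mat_def Rep_wo_inject)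

lemma conjm_invertible: "invertible (A::real^'n::finite^'n) \<Longrightarrow> invertible (conjm A)"
  unfolding invertible_def by (metis conjm_mult conjm_mat)

lemma has_integral_lin_wo:
  fixes M :: "real^'m::{finite,wellorder}^'m::_" and h :: "real^'m::_ \<Rightarrow> real"
  assumes M: "invertible M" and h: "\<And>x. 0 \<le> h x" and I: "(h has_integral I) UNIV"
  shows "((\<lambda>y. h (M *v y)) has_integral I / \<bar>det M\<bar>) UNIV"
proof -
  define v :: "real^1" where "v = vec 1"
  define F where "F x = h x *\<^sub>R v" for x
  have surj: "range (\<lambda>x. M *v x) = UNIV"
    using M by (metis invertible_def matrix_vector_mul_assoc matrix_vector_mul_lid surjI)
  have ai: "h absolutely_integrable_on UNIV"
    using I h by (intro nonnegative_absolutely_integrable) auto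
  have aiF: "F absolutely_integrable_on UNIV"
    unfolding F_def using ai by (rule absolutely_integrable_scaleR_right)
  have IF: "(F has_integral I *\<^sub>R v) UNIV"
    unfolding F_def by (rule has_integral_scaleR_left[OF I])
  have "(\<lambda>x. \<bar>det (matrix (\<lambda>x. M *v x))\<bar> *\<^sub>R F (M *v x)) absolutely_integrable_on UNIV \<and>
           integral UNIV (\<lambda>x. \<bar>det (matrix (\<lambda>x. M *v x))\<bar> *\<^sub>R F (M *v x)) = I *\<^sub>R v"
    using has_absolute_integral_change_of_variables_linear[where g="\<lambda>x. M *v x" and f=F and S=UNIV and b="I *\<^sub>R v"] surj aiF IF
    by (simp add: integral_unique)
  then have c: "(\<lambda>x. \<bar>det M\<bar> *\<^sub>R F (M *v x)) integrable_on UNIV"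
     "integral UNIV (\<lambda>x. \<bar>det M\<bar> *\<^sub>R F (M *v x)) = I *\<^sub>R v"
    by (simp_all only: matrix_of_matrix_vector_mul absolutely_integrable_on_def)
  then have "((\<lambda>x. \<bar>det M\<bar> *\<^sub>R F (M *v x)) has_integral I *\<^sub>R v) UNIV"
    by (metis integrable_integral)
  from has_integral_linear[OF this bounded_linear_vec_nth[of 1]]
  have "((\<lambda>x. \<bar>det M\<bar> * h (M *v x)) has_integral I) UNIV"
    by (simp add: o_def F_def v_def)
  moreover have "det M \<noteq> 0" using M by (simp add: invertible_det_nz)
  ultimately show ?thesis
    using has_integral_cmul[of "\<lambda>x. \<bar>det M\<bar> * h (M *v x)" I UNIV "1/\<bar>det M\<bar>"]
    by (simp add: divide_simps)
qed

lemma meas_affine_comp: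
  fixes h :: "'b::euclidean_space \<Rightarrow> real" and L :: "'a::euclidean_space \<Rightarrow> 'b"
  assumes "h \<in> borel_measurable borel" "linear L"
  shows "(\<lambda>x. h (c + L x)) \<in> borel_measurable borel"
proof -
  have "(\<lambda>x. c + L x) \<in> borel_measurable borel"
    using assms(2) by (intro borel_measurable_continuous_onI continuous_intros linear_continuous_on)
      (simp add: linear_conv_bounded_linear[symmetric])
  then show ?thesis using assms(1) by (rule measurable_compose)
qed

definition cdet :: "real^'n::finite^'n \<Rightarrow> real" where
  "cdet A = \<bar>det (conjm A)\<bar>"

lemma has_integral_lin:
  fixes A :: "real^'n::finite^'n" and h :: "real^'n \<Rightarrow> real"
  assumes A: "invertible A" and hm: "h \<in> borel_measurable borel" and h: "\<And>x. 0 \<le> h x"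
    and I: "(h has_integral I) UNIV"
  shows "((\<lambda>x. h (A *v x + a)) has_integral I / cdet A) UNIV"
proof -
  have m1: "(\<lambda>z. h (a + z)) \<in> borel_measurable borel"
    using meas_affine_comp[OF hm, of "\<lambda>x. x" a] by (simp add: linear_id[unfolded id_def])
  have tr: "distr lborel borel ((+) a) = lborel" by (rule lborel_distr_plus)
  have I1: "((\<lambda>z. h (a + z)) has_integral I) UNIV"
    using has_integral_measure_preserving[OF tr _ hm h I] by simp
  have m2: "(\<lambda>y. h (a + psi y)) \<in> borel_measurable borel"
    using meas_affine_comp[OF hm linear_psi] .
  have I2: "((\<lambda>y. h (a + psi y)) has_integral I) UNIV"
    using has_integral_measure_preserving[OF distr_psi meas_psi m1 _ I1] h by simp
  have M: "invertible (conjm A)" using A by (rule conjm_invertible)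
  have I3: "((\<lambda>y. h (a + psi (conjm A *v y))) has_integral I / \<bar>det (conjm A)\<bar>) UNIV"
    using has_integral_lin_wo[OF M _ I2] h by simp
  have m3: "(\<lambda>y. h (a + psi (conjm A *v y))) \<in> borel_measurable borel"
    using meas_affine_comp[OF hm linear_compose[OF matrix_vector_mul_linear linear_psi, unfolded o_def], of a "conjm A"] .
  have "((\<lambda>x. h (a + psi (conjm A *v phi x))) has_integral I / \<bar>det (conjm A)\<bar>) UNIV"
    using has_integral_measure_preserving[OF distr_phi meas_phi m3 _ I3] h by simp
  then show ?thesis by (simp add: conjm_mult_vec cdet_def add.commute)
qed

definition unconj :: "real^('n wo)^('n wo) \<Rightarrow> real^'n^'n" where
  "unconj M = (\<chi> k l. M $ Abs_wo k $ Abs_wo l)"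

lemma sum_Abs_wo: "(\<Sum>k\<in>UNIV. f (Abs_wo k)) = (\<Sum>j\<in>(UNIV::'n::finite wo set). f j)"
  using sum.reindex_bij_betw[OF bij_Abs_wo, of f] by simp

lemma unconj_conjm[simp]: "unconj (conjm A) = (A::real^'n::finite^'n)"
  by (simp add: vec_eq_iff conjm_def unconj_def Abs_wo_inverse)

lemma unconj_mult: "unconj (M ** N) = unconj M ** unconj (N::real^('n::finite wo)^('n wo))"
  by (simp add: vec_eq_iff unconj_def matrix_matrix_mult_def sum_Abs_wo[of "\<lambda>j. _ $ j * _ $ j $ _", symmetric])

lemma unconj_mat: "unconj (mat c :: real^('n::finite wo)^('n wo)) = mat c"
  by (simp add: vec_eq_iff unconj_def mat_def Abs_wo_inject)

lemma invertible_iff_cdet: "invertible (A::real^'n::finite^'n) \<longleftrightarrow> cdet A \<noteq> 0"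
proof
  assume "invertible A" then show "cdet A \<noteq> 0"
    using conjm_invertible[of A] invertible_det_nz[of "conjm A"] by (simp add: cdet_def)
next
  assume "cdet A \<noteq> 0"
  then have "invertible (conjm A)" by (simp add: cdet_def invertible_det_nz)
  then obtain M where "conjm A ** M = mat 1" "M ** conjm A = mat 1" by (auto simp: invertible_def)
  then have "A ** unconj M = mat 1" "unconj M ** A = mat 1"
    by (metis unconj_mult unconj_mat unconj_conjm)+
  then show "invertible A" by (auto simp: invertible_def)
qed

lemma cdet_mult: "cdet (A ** B) = cdet A * cdet (B::real^'n::finite^'n)"
  by (simp add: cdet_def conjm_mult det_mul abs_mult)

lemma cdet_one: "cdet (mat 1 :: real^'n::finite^'n) = 1"
  by (simp add: cdet_def conjm_mat)

lemma card_wo: "CARD('n::finite wo) = CARD('n)"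
  using bij_betw_same_card[OF bij_Abs_wo[where 'n='n]] by simp

lemma scaleR_mat_mult: "c *\<^sub>R (A::real^'n::finite^'n) = mat c ** A"
  by (simp add: vec_eq_iff matrix_matrix_mult_def mat_def if_distrib if_distribR cong: if_cong)

lemma cdet_scale: "cdet (c *\<^sub>R (A::real^'n::finite^'n)) = \<bar>c\<bar> ^ CARD('n) * cdet A"
proof -
  have "det (mat c :: real^'n wo^'n wo) = c ^ CARD('n)"
    by (subst det_diagonal) (auto simp: mat_def card_wo)
  then show ?thesis
    by (simp add: scaleR_mat_mult cdet_def conjm_mult conjm_mat det_mul abs_mult power_abs)
qed

lemma tendsto_cdet:
  fixes B :: "nat \<Rightarrow> real^'n::finite^'n"
  assumes "B \<longlonglongrightarrow> L"
  shows "(\<lambda>k. cdet (B k)) \<longlonglongrightarrow> cdet L"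
proof -
  have c: "(\<lambda>k. conjm (B k) $ i $ j) \<longlonglongrightarrow> conjm L $ i $ j" for i j
    unfolding conjm_def using assms by (simp add: tendsto_vec_nth)
  have "(\<lambda>k. det (conjm (B k))) \<longlonglongrightarrow> det (conjm L)"
    unfolding det_def by (intro tendsto_intros c)
  then show ?thesis unfolding cdet_def by (rule tendsto_rabs)
qed



lemma usc_limit:
  assumes "upper_semicont h" "x \<longlonglongrightarrow> l" "eventually (\<lambda>k. c \<le> h (x k)) sequentially"
  shows "c \<le> h l"
  using Lim_in_closed_set[of "{x. c \<le> h x}" "\<lambda>k. x k" sequentially l] assms
  by (auto simp: upper_semicont_def)

lemma usc_borel: "upper_semicont h \<Longrightarrow> h \<in> borel_measurable borel"
  unfolding borel_measurable_iff_ge upper_semicont_def by auto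

lemma usc_bounded_compact:
  assumes h: "upper_semicont h" and K: "compact K"
  shows "\<exists>B. \<forall>x\<in>K. h x \<le> B"
proof (rule ccontr)
  assume "\<not> ?thesis"
  then have "\<forall>n::nat. \<exists>x\<in>K. real n < h x" by (meson not_le)
  then obtain x where x: "\<And>n. x n \<in> K" "\<And>n. real n < h (x n)" by metis
  obtain l r where l: "l \<in> K" "strict_mono r" "(x \<circ> r) \<longlonglongrightarrow> l"
    using seq_compactE[OF compact_imp_seq_compact[OF K], of x] x(1) by metis
  have "h l + 1 \<le> h l"
  proof (rule usc_limit[OF h l(3)])
    obtain N :: nat where N: "h l + 1 \<le> real N" using real_arch_simple by blast
    show "\<forall>\<^sub>F k in sequentially. h l + 1 \<le> h ((x \<circ> r) k)"
      unfolding eventually_sequentially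
    proof (intro exI allI impI)
      fix k assume "N \<le> k"
      then have "real N \<le> real (r k)" using seq_suble[OF l(2), of k] by simp
      then show "h l + 1 \<le> h ((x \<circ> r) k)" using N x(2)[of "r k"] by simp
    qed
  qed
  then show False by simp
qed

lemma lc_min:
  assumes h: "log_concave h" and hx: "s \<le> h x" and hy: "s \<le> h y" and s: "0 < s"
    and t: "0 \<le> t" "t \<le> 1"
  shows "s \<le> h ((1 - t) *\<^sub>R x + t *\<^sub>R y)"
proof (cases "t = 0 \<or> t = 1")
  case True then show ?thesis using hx hy by auto
next
  case False
  then have t01: "0 < t" "t < 1" using t by auto
  have "s = s powr (1 - t) * s powr t" using s by (simp add: powr_add[symmetric])
  also have "\<dots> \<le> h x powr (1 - t) * h y powr t"
    using hx hy s t01 by (intro mult_mono powr_mono2) auto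
  also have "\<dots> \<le> h ((1 - t) *\<^sub>R x + t *\<^sub>R y)"
    using h t01 unfolding log_concave_def by blast
  finally show ?thesis .
qed

lemma lc_ball:
  fixes h :: "real^'n \<Rightarrow> real"
  assumes h: "log_concave h" and pos: "integral UNIV h > 0"
  shows "\<exists>z r c. 0 < r \<and> 0 < c \<and> (\<forall>x\<in>ball z r. c \<le> h x)"
proof -
  have h0: "\<And>x. 0 \<le> h x" using h by (simp add: log_concave_def)
  have "\<exists>c>0. \<not> negligible {x. c \<le> h x}"
  proof (rule ccontr)
    assume "\<not> ?thesis"
    then have neg: "\<And>c. c > 0 \<Longrightarrow> negligible {x. c \<le> h x}" by blast
    let ?N = "\<Union>n::nat. {x. 1 / real (Suc n) \<le> h x}"
    have negN: "negligible ?N"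
    proof (rule negligible_countable_Union)
      show "countable (range (\<lambda>n::nat. {x. 1 / real (Suc n) \<le> h x}))" by simp
    next
      fix S assume "S \<in> range (\<lambda>n::nat. {x. 1 / real (Suc n) \<le> h x})"
      then obtain n where "S = {x. 1 / real (Suc n) \<le> h x}" by blast
      then show "negligible S" using neg[of "1 / real (Suc n)"] by simp
    qed
    have z: "h x = 0" if "x \<in> UNIV - ?N" for x
    proof (rule ccontr)
      assume "h x \<noteq> 0"
      then have "h x > 0" using h0[of x] by simp
      then obtain n where "inverse (real (Suc n)) < h x"
        using reals_Archimedean by blast
      then have "x \<in> {x. 1 / real (Suc n) \<le> h x}" by (simp add: inverse_eq_divide)
      then show False using that by blast
    qed
    have e: "integral UNIV h = integral UNIV (\<lambda>_::real^'n. 0::real)"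
      by (rule integral_spike[OF negN]) (metis z)
    have "integral UNIV (\<lambda>_::real^'n. 0::real) = 0" by (rule integral_0)
    then show False using pos e by linarith
  qed
  then obtain c where c: "c > 0" "\<not> negligible {x. c \<le> h x}" by blast
  have "convex {x. c \<le> h x}"
  proof (rule convexI)
    fix x y :: "real^'n" and u v :: real
    assume "x \<in> {x. c \<le> h x}" "y \<in> {x. c \<le> h x}" "0 \<le> u" "0 \<le> v" "u + v = 1"
    moreover have "u = 1 - v" using \<open>u + v = 1\<close> by simp
    ultimately show "u *\<^sub>R x + v *\<^sub>R y \<in> {x. c \<le> h x}"
      using lc_min[OF h _ _ c(1), of x y v] by simp
  qed
  then have "interior {x. c \<le> h x} \<noteq> {}"
    using c(2) negligible_convex_interior[of "{x. c \<le> h x}"] by simp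
  then obtain z where "z \<in> interior {x. c \<le> h x}" by blast
  then obtain r where "r > 0" "ball z r \<subseteq> {x. c \<le> h x}" unfolding mem_interior by blast
  then show ?thesis using c(1) by (intro exI[of _ z] exI[of _ r] exI[of _ c]) auto
qed

lemma lc_level_bounded:
  fixes h :: "real^'n \<Rightarrow> real"
  assumes h: "log_concave h" and hi: "h integrable_on UNIV" and s: "0 < s" and r: "0 < r"
    and hb: "\<And>x. x \<in> ball x0 r \<Longrightarrow> s \<le> h x"
  shows "bounded {x. s \<le> h x}"
proof -
  have h0: "\<And>x. 0 \<le> h x" using h by (simp add: log_concave_def)
  define K where "K = integral UNIV h"
  have hK: "(h has_integral K) UNIV" using hi by (simp add: K_def integrable_integral)
  have K0: "0 \<le> K" using has_integral_nonneg[OF hK] h0 by auto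
  define V where "V = measure lebesgue (ball (0::real^'n) (r/2))"
  have "measure lborel (ball (0::real^'n) (r/2)) > 0" using content_ball_pos[of "r/2"] r by simp
  then have V: "V > 0" unfolding V_def by (subst measure_completion) auto
  have Vc: "measure lebesgue (ball c (r/2)) = V" for c :: "real^'n"
    using measure_translation[of c "ball 0 (r/2)"] by (simp add: V_def)
  have key: "norm (p - x0) \<le> 4 * r * (K / (s * V))" if p: "s \<le> h p" for p
  proof (rule ccontr)
    define D where "D = norm (p - x0)"
    assume "\<not> norm (p - x0) \<le> 4 * r * (K / (s * V))"
    then have DK: "4 * r * (K / (s * V)) < D" by (simp add: D_def)
    have "0 \<le> 4 * r * (K / (s * V))" using K0 s V r by simp
    then have D0: "0 < D" using DK by linarith
    define N where "N = nat \<lfloor>D / (4*r)\<rfloor>"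
    have N1: "real N \<le> D / (4*r)" using D0 r by (simp add: N_def)
    have N2: "D / (4*r) < real N + 1" using D0 r by (simp add: N_def)
    define t where "t j = 2 * r * real j / D" for j :: nat
    define c where "c j = x0 + t j *\<^sub>R (p - x0)" for j
    have t01: "0 \<le> t j \<and> t j \<le> 1/2" if "j \<le> N" for j
    proof -
      have "real j \<le> D / (4*r)" using that N1 by linarith
      then have "2 * r * real j \<le> D / 2" using r by (simp add: field_simps)
      then show ?thesis using D0 r by (simp add: t_def field_simps)
    qed
    have sub: "s \<le> h y" if j: "j \<le> N" and y: "y \<in> ball (c j) (r/2)" for j y
    proof -
      define tt where "tt = t j"
      have tt: "0 \<le> tt" "tt \<le> 1/2" using t01[OF j] by (auto simp: tt_def)
      define q where "q = x0 + (1 / (1 - tt)) *\<^sub>R (y - c j)"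
      have "norm (y - c j) < r / 2" using y by (simp add: dist_norm norm_minus_commute)
      moreover have "r * tt \<le> r * (1/2)" using tt r by (intro mult_left_mono) auto
      ultimately have "r * tt + norm (y - c j) < r" by linarith
      then have "norm (y - c j) / (1 - tt) < r"
        using tt r by (simp add: field_simps)
      then have "q \<in> ball x0 r" using tt by (simp add: q_def dist_norm)
      then have "s \<le> h q" by (rule hb)
      have "(1 - tt) *\<^sub>R q = (1 - tt) *\<^sub>R x0 + (y - c j)"
        using tt by (simp add: q_def scaleR_add_right)
      then have yq: "y = (1 - tt) *\<^sub>R q + tt *\<^sub>R p"
        by (simp add: c_def tt_def[symmetric] algebra_simps)
      show ?thesis using lc_min[OF h \<open>s \<le> h q\<close> p s tt(1)] tt yq by simp
    qed
    have disj: "disjoint_family_on (\<lambda>j. ball (c j) (r/2)) {..N}"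
    unfolding disjoint_family_on_def proof (intro ballI impI)
      fix i j assume ij: "i \<in> {..N}" "j \<in> {..N}" "i \<noteq> j"
      have "c i - c j = (t i - t j) *\<^sub>R (p - x0)" by (simp add: c_def algebra_simps)
      then have "dist (c i) (c j) = \<bar>t i - t j\<bar> * D"
        by (simp add: dist_norm D_def)
      also have "\<dots> = 2 * r * \<bar>real i - real j\<bar>"
      proof -
        have "t i - t j = (2 * r / D) * (real i - real j)" by (simp add: t_def diff_divide_distrib right_diff_distrib)
        then show ?thesis using D0 r by (simp add: abs_mult)
      qed
      also have "\<dots> \<ge> 2 * r" using ij r by (cases "i < j") auto
      finally have "2 * r \<le> dist (c i) (c j)" .
      show "ball (c i) (r/2) \<inter> ball (c j) (r/2) = {}"
      proof (rule ccontr)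
        assume "ball (c i) (r/2) \<inter> ball (c j) (r/2) \<noteq> {}"
        then obtain y where y: "dist (c i) y < r/2" "dist (c j) y < r/2" by auto
        have "dist (c i) (c j) \<le> dist (c i) y + dist (c j) y" by (metis dist_commute dist_triangle)
        then show False using y \<open>2 * r \<le> dist (c i) (c j)\<close> r by linarith
      qed
    qed
    have fin: "emeasure lborel (ball c' \<rho>) \<noteq> top" for c' :: "real^'n" and \<rho>
      using emeasure_lborel_ball_finite[of c' \<rho>] by (simp add: less_top)
    define U where "U = (\<Union>j\<in>{..N}. ball (c j) (r/2))"
    have Ul: "U \<in> lmeasurable" unfolding U_def by (intro fmeasurable.finite_UN) auto
    have "measure lebesgue U = (\<Sum>j\<in>{..N}. measure lebesgue (ball (c j) (r/2)))"
      unfolding U_def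
    proof (rule measure_finite_Union)
      show "(\<lambda>j. ball (c j) (r / 2)) ` {..N} \<subseteq> sets lebesgue" by auto
      show "emeasure lebesgue (ball (c i) (r / 2)) \<noteq> \<infinity>" for i
        using fmeasurableD2[OF lmeasurable_ball[of "c i" "r/2"]] by simp
    qed (use disj in auto)
    also have "\<dots> = (real N + 1) * V" by (simp add: Vc)
    finally have mU: "measure lebesgue U = (real N + 1) * V" .
    have "(indicator U has_integral measure lebesgue U) UNIV"
      using Ul lmeasurable_iff_indicator_has_integral by blast
    then have iU: "((\<lambda>x. s * indicator U x) has_integral s * ((real N + 1) * V)) UNIV"
      unfolding mU[symmetric] by (rule has_integral_mult_right)
    have "s * ((real N + 1) * V) \<le> K"
    proof (rule has_integral_le[OF iU hK])
      fix x show "s * indicator U x \<le> h x"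
      proof (cases "x \<in> U")
        case True
        then obtain j where "j \<le> N" "x \<in> ball (c j) (r/2)" by (auto simp: U_def)
        then have "s \<le> h x" by (rule sub)
        then show ?thesis using True by simp
      next
        case False
        then show ?thesis using h0[of x] by simp
      qed
    qed
    then have "(real N + 1) * (s * V) \<le> K" by (simp add: algebra_simps)
    then have "real N + 1 \<le> K / (s * V)" using s V by (simp add: pos_le_divide_eq)
    then have "D / (4 * r) < K / (s * V)" using N2 by linarith
    then have "D < 4 * r * (K / (s * V))" using r by (simp add: pos_divide_less_eq mult.commute)
    then show False using DK by linarith
  qed
  have "{x. s \<le> h x} \<subseteq> cball x0 (4 * r * (K / (s * V)))"
    using key by (auto simp: dist_norm norm_minus_commute)
  then show ?thesis using bounded_cball bounded_subset by blast
qed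



lemma card_pos_real: "1 \<le> real CARD('n::finite)"
  using card_gt_0_iff[of "UNIV :: 'n set"] by simp

lemma improve:
  fixes f w :: "real^'n::finite \<Rightarrow> real" and A :: "real^'n^'n"
  assumes f: "log_concave f"
    and w0: "\<And>y. 0 \<le> w y" and wW: "\<And>y. w y \<le> W" and W: "0 < W"
    and A: "invertible A" and \<alpha>: "0 < \<alpha>"
    and feas: "\<And>x. \<alpha> * w (A *v x + a) \<le> f x"
    and F: "exp (real CARD('n)) * (\<alpha> * W) < f xz"
  shows "\<exists>A' \<alpha>' a'. invertible A' \<and> 0 < \<alpha>' \<and> (\<forall>x. \<alpha>' * w (A' *v x + a') \<le> f x) \<and>
           \<alpha>' * W = f xz * exp (- real CARD('n)) \<and> \<alpha> / cdet A < \<alpha>' / cdet A'"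
proof -
  define n where "n = CARD('n)"
  define d where "d = real n"
  have d1: "1 \<le> d" using card_pos_real[where 'n='n] by (simp add: d_def n_def)
  define m where "m = \<alpha> * W"
  have m: "0 < m" using \<alpha> W by (simp add: m_def)
  define Fv where "Fv = f xz"
  have Fm: "exp d * m < Fv" using F by (simp add: Fv_def m_def d_def n_def)
  have Fv: "0 < Fv" using Fm m by (smt (verit) exp_gt_zero mult_pos_pos)
  define L where "L = ln Fv - ln m"
  have "d < L"
  proof -
    have "ln (exp d * m) < ln Fv" using Fm m Fv by (intro ln_less_cancel_iff[THEN iffD2]) auto
    then show ?thesis using m by (simp add: L_def ln_mult)
  qed
  then have L: "0 < L" using d1 by simp
  define t where "t = d / L"
  have t: "0 < t" "t < 1" using \<open>d < L\<close> d1 L by (auto simp: t_def)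
  have dtL: "d = t * L" using L by (simp add: t_def)
  define lam where "lam = exp (L - d)"
  define \<alpha>' where "\<alpha>' = lam * \<alpha>"
  define A' where "A' = (1 / t) *\<^sub>R A"
  define a' where "a' = a - ((1 - t) / t) *\<^sub>R (A *v xz)"
  have invA': "invertible A'" unfolding A'_def using A t by (intro scalar_invertible) auto
  have \<alpha>'0: "0 < \<alpha>'" using \<alpha> by (simp add: \<alpha>'_def lam_def)
  have feas': "\<alpha>' * w (A' *v y + a') \<le> f y" for y
  proof -
    define z where "z = (1 / t) *\<^sub>R (y - (1 - t) *\<^sub>R xz)"
    have yz: "y = (1 - t) *\<^sub>R xz + t *\<^sub>R z" using t by (simp add: z_def)
    have Az: "A' *v y + a' = A *v z + a"
    proof -
      have "A' *v y = (1 / t) *\<^sub>R (A *v y)"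
        by (simp add: A'_def scaleR_matrix_vector_assoc)
      moreover have "A *v z = (1 / t) *\<^sub>R (A *v y) - ((1 - t) / t) *\<^sub>R (A *v xz)"
        by (simp add: z_def matrix_vector_mult_scaleR matrix_vector_mult_diff_distrib
              scaleR_diff_right)
      ultimately show ?thesis by (simp add: a'_def)
    qed
    define g where "g = \<alpha> * w (A *v z + a)"
    have g0: "0 \<le> g" using \<alpha> w0 by (simp add: g_def)
    have gm: "g \<le> m" using \<alpha> wW by (simp add: g_def m_def)
    have gf: "g \<le> f z" using feas by (simp add: g_def)
    have lc: "f xz powr (1 - t) * f z powr t \<le> f y"
      using f t yz unfolding log_concave_def by metis
    have "lam * g \<le> Fv powr (1 - t) * g powr t"
    proof (cases "g = 0")
      case True then show ?thesis by simp
    next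
      case False
      then have gp: "0 < g" using g0 by simp
      have "ln g \<le> ln m" using gp gm by simp
      moreover have "L - d + ln g - ((1 - t) * ln Fv + t * ln g) = (1 - t) * (ln g - ln m)"
        by (simp add: dtL L_def algebra_simps)
      moreover have "(1 - t) * (ln g - ln m) \<le> 0"
        using t \<open>ln g \<le> ln m\<close> by (intro mult_nonneg_nonpos) auto
      ultimately have "L - d + ln g \<le> (1 - t) * ln Fv + t * ln g" by linarith
      then have "exp (L - d + ln g) \<le> exp ((1 - t) * ln Fv + t * ln g)" by simp
      then show ?thesis using gp Fv
        by (simp add: lam_def exp_add powr_def)
    qed
    also have "\<dots> \<le> f xz powr (1 - t) * f z powr t"
      using g0 gf t unfolding Fv_def by (intro mult_left_mono powr_mono2) auto
    also have "\<dots> \<le> f y" by (rule lc)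
    finally show ?thesis by (simp add: \<alpha>'_def Az g_def mult.assoc)
  qed
  have "exp L = Fv / m" using Fv m by (simp add: L_def exp_diff)
  have "\<alpha>' * W = exp (L - d) * m" by (simp add: \<alpha>'_def lam_def m_def mult.assoc)
  also have "\<dots> = exp L * m * exp (- d)" by (simp add: exp_diff exp_minus field_simps)
  also have "\<dots> = Fv * exp (- d)" using \<open>exp L = Fv / m\<close> m by simp
  finally have max: "\<alpha>' * W = Fv * exp (- d)" .
  have cA': "cdet A' = (1 / t) ^ n * cdet A"
    using t by (simp add: A'_def cdet_scale n_def)
  have cA: "0 < cdet A" using A invertible_iff_cdet[of A] by (simp add: cdet_def)
  have gt1: "1 < lam * t ^ n"
  proof -
    define u where "u = L / d"
    have u: "1 < u" using \<open>d < L\<close> d1 by (simp add: u_def)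
    have "exp (L - d) = exp (u - 1) ^ n"
      using d1 by (simp add: u_def d_def exp_of_nat_mult[symmetric] field_simps)
    moreover have "t ^ n = (1 / u) ^ n" by (simp add: t_def u_def)
    ultimately have eq: "lam * t ^ n = (exp (u - 1) / u) ^ n"
      by (simp add: lam_def power_divide)
    have "1 + (u - 1) + (u - 1)\<^sup>2 / 2 \<le> exp (u - 1)"
      using u by (intro exp_lower_Taylor_quadratic) simp
    moreover have "0 < (u - 1)\<^sup>2 / 2" using u by simp
    ultimately have "u < exp (u - 1)" by linarith
    then have "1 < exp (u - 1) / u" using u by simp
    moreover have "0 < n" using d1 by (simp add: d_def)
    ultimately show ?thesis unfolding eq by (rule one_less_power)
  qed
  have "\<alpha> / cdet A < \<alpha>' / cdet A'"
  proof -
    have eq: "\<alpha>' / cdet A' = (lam * t ^ n) * (\<alpha> / cdet A)"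
      using t by (simp add: cA' \<alpha>'_def power_one_over field_simps)
    have pos: "0 < \<alpha> / cdet A" using \<alpha> cA by simp
    have "1 * (\<alpha> / cdet A) < (lam * t ^ n) * (\<alpha> / cdet A)"
      using gt1 pos by (rule mult_strict_right_mono)
    then show ?thesis using eq by (simp only: mult_1)
  qed
  then show ?thesis
    using invA' \<alpha>'0 feas' max by (auto simp: Fv_def d_def n_def)
qed



lemma minv: "invertible (A::real^'n::finite^'n) \<Longrightarrow> A ** matrix_inv A = mat 1 \<and> matrix_inv A ** A = mat 1"
  unfolding invertible_def matrix_inv_def by (rule someI_ex)

lemma minv_invertible: "invertible (A::real^'n::finite^'n) \<Longrightarrow> invertible (matrix_inv A)"
  using minv unfolding invertible_def by blast

lemma cdet_inv: "invertible (A::real^'n::finite^'n) \<Longrightarrow> cdet A * cdet (matrix_inv A) = 1"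
proof -
  assume A: "invertible A"
  have "cdet (A ** matrix_inv A) = 1" using minv[OF A] by (simp add: cdet_one)
  then show ?thesis by (simp add: cdet_mult)
qed

lemma mvA_inv: "invertible (A::real^'n::finite^'n) \<Longrightarrow> A *v (matrix_inv A *v y) = y"
  using minv[of A] by (simp add: matrix_vector_mul_assoc)

lemma mvinv_A: "invertible (A::real^'n::finite^'n) \<Longrightarrow> matrix_inv A *v (A *v y) = y"
  using minv[of A] by (simp add: matrix_vector_mul_assoc)

lemma w_bdd:
  fixes w :: "real^'n::finite \<Rightarrow> real"
  assumes pw: "proper_log_concave w" and bw: "bounded (support_of w)"
  shows "bdd_above (range w)"
proof -
  obtain R where R: "0 < R" "support_of w \<subseteq> ball 0 R" using bounded_subset_ballD[OF bw] by blast
  have usc: "upper_semicont w" using pw by (simp add: proper_log_concave_def)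
  obtain B where B: "\<forall>x\<in>cball 0 R. w x \<le> B" using usc_bounded_compact[OF usc compact_cball] by blast
  have "w y \<le> max B 0" for y
  proof (cases "w y > 0")
    case True
    then have "y \<in> cball 0 R" using R by (auto simp: support_of_def)
    then show ?thesis using B by (meson max.coboundedI1)
  qed auto
  then show ?thesis by (intro bdd_aboveI2[where M="max B 0"])
qed

lemma sup_norm_nonneg_eq: "(\<And>x. 0 \<le> h x) \<Longrightarrow> sup_norm h = Sup (range h)"
  by (simp add: sup_norm_def)

lemma W_props:
  fixes w :: "real^'n::finite \<Rightarrow> real"
  assumes pw: "proper_log_concave w" and bw: "bounded (support_of w)"
  shows "\<And>y. w y \<le> sup_norm w" "0 < sup_norm w"
proof -
  have w0: "\<And>x. 0 \<le> w x" using pw by (simp add: proper_log_concave_def log_concave_def)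
  have bdd: "bdd_above (range w)" by (rule w_bdd[OF pw bw])
  show le: "w y \<le> sup_norm w" for y
    using w0 bdd by (simp add: sup_norm_nonneg_eq cSUP_upper)
  obtain z r c where "0 < r" "0 < c" "\<forall>x\<in>ball z r. c \<le> w x"
    using lc_ball[of w] pw by (auto simp: proper_log_concave_def)
  then have "0 < w z" by (metis centre_in_ball less_le_trans)
  then show "0 < sup_norm w" using le[of z] by simp
qed

lemma sup_norm_pos:
  fixes w :: "real^'n::finite \<Rightarrow> real" and A :: "real^'n^'n"
  assumes w0: "\<And>x. 0 \<le> w x" and bdd: "bdd_above (range w)"
    and A: "invertible A" and \<alpha>: "0 < \<alpha>"
  shows "sup_norm (\<lambda>x. \<alpha> * w (A *v x + a)) = \<alpha> * sup_norm w"
proof -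
  have r: "range (\<lambda>x. \<alpha> * w (A *v x + a)) = range (\<lambda>y. \<alpha> * w y)"
  proof
    show "range (\<lambda>x. \<alpha> * w (A *v x + a)) \<subseteq> range (\<lambda>y. \<alpha> * w y)" by auto
    show "range (\<lambda>y. \<alpha> * w y) \<subseteq> range (\<lambda>x. \<alpha> * w (A *v x + a))"
    proof
      fix v assume "v \<in> range (\<lambda>y. \<alpha> * w y)"
      then obtain y where "v = \<alpha> * w y" by auto
      then have "v = \<alpha> * w (A *v (matrix_inv A *v (y - a)) + a)" using mvA_inv[OF A] by simp
      then show "v \<in> range (\<lambda>x. \<alpha> * w (A *v x + a))" by blast
    qed
  qed
  have bdd2: "bdd_above (range (\<lambda>y. \<alpha> * w y))"
  proof -
    obtain M where "\<And>y. w y \<le> M" using bdd by (auto simp: bdd_above_def)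
    then have "\<And>y. \<alpha> * w y \<le> \<alpha> * M" using \<alpha> by (intro mult_left_mono) auto
    then show ?thesis by (intro bdd_aboveI2[where M="\<alpha> * M"])
  qed
  have "Sup (range (\<lambda>y. \<alpha> * w y)) = \<alpha> * Sup (range w)"
  proof (rule antisym)
    show "Sup (range (\<lambda>y. \<alpha> * w y)) \<le> \<alpha> * Sup (range w)"
      using bdd \<alpha> by (intro cSUP_least) (auto intro: mult_left_mono cSUP_upper)
    have "Sup (range w) \<le> Sup (range (\<lambda>y. \<alpha> * w y)) / \<alpha>"
    proof (rule cSUP_least)
      fix y
      have "\<alpha> * w y \<le> Sup (range (\<lambda>y. \<alpha> * w y))" using bdd2 by (intro cSUP_upper) auto
      then show "w y \<le> Sup (range (\<lambda>y. \<alpha> * w y)) / \<alpha>" using \<alpha> by (simp add: field_simps)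
    qed simp
    then show "\<alpha> * Sup (range w) \<le> Sup (range (\<lambda>y. \<alpha> * w y))" using \<alpha> by (simp add: field_simps)
  qed
  then show ?thesis using w0 \<alpha>
    by (simp add: sup_norm_nonneg_eq r)
qed

lemma pos_integral:
  fixes w :: "real^'n::finite \<Rightarrow> real" and A :: "real^'n^'n"
  assumes pw: "proper_log_concave w" and A: "invertible A"
  shows "((\<lambda>x. \<alpha> * w (A *v x + a)) has_integral \<alpha> * integral UNIV w / cdet A) UNIV"
proof -
  have w0: "\<And>x. 0 \<le> w x" using pw by (simp add: proper_log_concave_def log_concave_def)
  have wm: "w \<in> borel_measurable borel" by (intro usc_borel) (use pw in \<open>simp add: proper_log_concave_def\<close>)
  have I: "(w has_integral integral UNIV w) UNIV"
    using pw by (simp add: proper_log_concave_def integrable_integral)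
  show ?thesis using has_integral_mult_right[OF has_integral_lin[OF A wm w0 I, of a], of \<alpha>]
    by simp
qed



lemma bl_mv: "bounded_linear (\<lambda>M::real^'n::finite^'m::finite. M *v v)"
proof -
  have "linear (\<lambda>M::real^'n^'m. M *v v)"
    by (rule linearI) (simp_all add: matrix_vector_mult_add_rdistrib scaleR_matrix_vector_assoc)
  then show ?thesis by (simp add: linear_conv_bounded_linear)
qed

lemma tendsto_mv:
  fixes M :: "nat \<Rightarrow> real^'n::finite^'m::finite"
  assumes "M \<longlonglongrightarrow> L" shows "(\<lambda>k. M k *v v) \<longlonglongrightarrow> L *v v"
  using bounded_linear.tendsto[OF bl_mv assms] .

lemma norm_matrix_bound:
  fixes B :: "real^'n::finite^'m::finite"
  assumes "\<And>i j. \<bar>B $ i $ j\<bar> \<le> c"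
  shows "norm B \<le> real CARD('m) * (real CARD('n) * c)"
proof -
  have row: "norm (B $ i) \<le> real CARD('n) * c" for i
  proof -
    have "norm (B $ i) \<le> (\<Sum>j\<in>UNIV. \<bar>B $ i $ j\<bar>)" by (rule norm_le_l1_cart)
    also have "\<dots> \<le> (\<Sum>j\<in>(UNIV::'n set). c)" by (rule sum_mono) (rule assms)
    finally show ?thesis by simp
  qed
  have "norm B = L2_set (\<lambda>i. norm (B $ i)) UNIV" by (simp add: norm_vec_def)
  also have "\<dots> \<le> (\<Sum>i\<in>UNIV. norm (B $ i))" by (rule L2_set_le_sum) simp
  also have "\<dots> \<le> (\<Sum>i\<in>(UNIV::'m set). real CARD('n) * c)" by (rule sum_mono) (rule row)
  finally show ?thesis by simp
qed



lemma main_exists: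
  fixes f w :: "real^'n::finite \<Rightarrow> real"
  assumes pf: "proper_log_concave f" and pw: "proper_log_concave w" and bw: "bounded (support_of w)"
  shows "\<exists>A0 \<alpha>0 a0. invertible A0 \<and> 0 < \<alpha>0 \<and> (\<forall>x. \<alpha>0 * w (A0 *v x + a0) \<le> f x) \<and>
     (\<forall>A \<alpha> a. invertible A \<and> 0 < \<alpha> \<and> (\<forall>x. \<alpha> * w (A *v x + a) \<le> f x) \<longrightarrow> \<alpha> / cdet A \<le> \<alpha>0 / cdet A0)
     \<and> bdd_above (range f)"
proof -
  have f0: "\<And>x. 0 \<le> f x" and w0: "\<And>x. 0 \<le> w x"
    using pf pw by (auto simp: proper_log_concave_def log_concave_def)
  have fusc: "upper_semicont f" and flc: "log_concave f" and fint: "f integrable_on UNIV"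
    and If: "0 < integral UNIV f" using pf by (auto simp: proper_log_concave_def)
  have wlc: "log_concave w" and Iw: "0 < integral UNIV w" using pw by (auto simp: proper_log_concave_def)
  define W where "W = sup_norm w"
  have Wle: "\<And>y. w y \<le> W" and W0: "0 < W" using W_props[OF pw bw] by (auto simp: W_def)
  define d where "d = real CARD('n)"
  define P where "P A \<alpha> a \<longleftrightarrow> invertible A \<and> 0 < \<alpha> \<and> (\<forall>x. \<alpha> * w (A *v x + a) \<le> f x)"
    for A :: "real^'n^'n" and \<alpha> a
  obtain zf rf cf where zf: "0 < rf" "0 < cf" "\<forall>x\<in>ball zf rf. cf \<le> f x"
    using lc_ball[OF flc If] by blast
  obtain Rw where Rw: "0 < Rw" "support_of w \<subseteq> ball 0 Rw" using bounded_subset_ballD[OF bw] by blast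
  have P1: "\<exists>A \<alpha> a. P A \<alpha> a"
  proof -
    define k where "k = Rw / rf"
    have k: "0 < k" using Rw zf by (simp add: k_def)
    have inv1: "invertible (mat 1 :: real^'n^'n)" by (auto simp: invertible_def)
    have invk: "invertible (k *\<^sub>R (mat 1 :: real^'n^'n))" using k inv1 by (intro scalar_invertible) auto
    have eq: "(k *\<^sub>R mat 1) *v x + - (k *\<^sub>R zf) = k *\<^sub>R (x - zf)" for x :: "real^'n"
      by (simp add: scaleR_matrix_vector_assoc[symmetric] scaleR_diff_right)
    have "cf / W * w ((k *\<^sub>R mat 1) *v x + - (k *\<^sub>R zf)) \<le> f x" for x
    proof (cases "0 < w (k *\<^sub>R (x - zf))")
      case True
      then have "k *\<^sub>R (x - zf) \<in> ball 0 Rw" using Rw by (auto simp: support_of_def)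
      then have "k * norm (x - zf) < Rw" using k by simp
      then have "norm (x - zf) < rf" using k zf Rw by (simp add: k_def field_simps)
      then have "x \<in> ball zf rf" by (simp add: dist_norm norm_minus_commute)
      then have "cf \<le> f x" using zf by auto
      moreover have "cf / W * w (k *\<^sub>R (x - zf)) \<le> cf / W * W"
        using Wle zf W0 by (intro mult_left_mono) auto
      ultimately show ?thesis using W0 eq by simp
    next
      case False
      then have "w (k *\<^sub>R (x - zf)) = 0" using w0 by (simp add: not_less order_antisym)
      then show ?thesis using eq f0 by simp
    qed
    then have "P (k *\<^sub>R mat 1) (cf / W) (- (k *\<^sub>R zf))"
      using invk zf W0 by (simp add: P_def)
    then show ?thesis by blast
  qed
  define amin where "amin = f zf * exp (- d) / W"
  have fzf: "0 < f zf" using zf by (metis centre_in_ball less_le_trans)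
  have amin0: "0 < amin" using fzf W0 by (simp add: amin_def)
  have normal: "\<exists>A' \<alpha>' a'. P A' \<alpha>' a' \<and> amin \<le> \<alpha>' \<and> \<alpha> / cdet A \<le> \<alpha>' / cdet A'" if "P A \<alpha> a" for A \<alpha> a
  proof (cases "amin \<le> \<alpha>")
    case True then show ?thesis using that by blast
  next
    case False
    then have "\<alpha> * W < f zf * exp (- d)" using W0 by (simp add: amin_def field_simps)
    then have "exp d * (\<alpha> * W) < f zf" by (simp add: exp_minus field_simps)
    moreover have "invertible A" "0 < \<alpha>" "\<And>x. \<alpha> * w (A *v x + a) \<le> f x" using that by (auto simp: P_def)
    ultimately obtain A' \<alpha>' a' where imp: "invertible A'" "0 < \<alpha>'" "\<forall>x. \<alpha>' * w (A' *v x + a') \<le> f x"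
        "\<alpha>' * W = f zf * exp (- d)" "\<alpha> / cdet A < \<alpha>' / cdet A'"
      using improve[where f=f and w=w and W=W and A=A and \<alpha>=\<alpha> and a=a and xz=zf, OF flc w0 Wle W0]
      unfolding d_def by blast
    have "\<alpha>' = amin" using imp(4) W0 by (simp add: amin_def field_simps)
    then have "P A' \<alpha>' a' \<and> amin \<le> \<alpha>' \<and> \<alpha> / cdet A \<le> \<alpha>' / cdet A'"
      using imp by (auto simp: P_def)
    then show ?thesis by blast
  qed
  obtain y0 \<rho> cw where y0: "0 < \<rho>" "0 < cw" "\<forall>y\<in>ball y0 \<rho>. cw \<le> w y"
    using lc_ball[OF wlc Iw] by blast
  define s where "s = amin * cw"
  have s0: "0 < s" using amin0 y0 by (simp add: s_def)
  have lev: "s \<le> f x" if "P A \<alpha> a" "amin \<le> \<alpha>" "A *v x + a \<in> ball y0 \<rho>" for A \<alpha> a x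
  proof -
    have "s \<le> \<alpha> * w (A *v x + a)"
      unfolding s_def using that y0 amin0 by (intro mult_mono) auto
    also have "\<dots> \<le> f x" using that by (simp add: P_def)
    finally show ?thesis .
  qed
  obtain A1 \<alpha>1 a1 where p1: "P A1 \<alpha>1 a1" "amin \<le> \<alpha>1" using P1 normal by metis
  have "bounded {x. s \<le> f x}"
  proof -
    define xe where "xe = matrix_inv A1 *v (y0 - a1)"
    have inv1: "invertible A1" using p1 by (simp add: P_def)
    define E where "E = (\<lambda>x. A1 *v x + a1) -` ball y0 \<rho>"
    have bl: "bounded_linear (\<lambda>x. A1 *v x)" by (simp add: linear_conv_bounded_linear[symmetric])
    have "open E" unfolding E_def
      by (intro continuous_open_vimage open_ball continuous_add continuous_const linear_continuous_at bl)
    moreover have "xe \<in> E" using y0 mvA_inv[OF inv1] by (simp add: E_def xe_def)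
    ultimately obtain r1 where r1: "0 < r1" "ball xe r1 \<subseteq> E" using open_contains_ball by blast
    have "s \<le> f x" if "x \<in> ball xe r1" for x
      using lev[OF p1] that r1 by (auto simp: E_def)
    then show ?thesis by (intro lc_level_bounded[OF flc fint s0 r1(1)])
  qed
  then obtain R where R: "\<And>x. s \<le> f x \<Longrightarrow> norm x \<le> R" by (auto simp: bounded_iff)
  obtain Mf where Mf: "\<And>x. f x \<le> Mf"
  proof -
    have "closed {x. s \<le> f x}" using fusc by (simp add: upper_semicont_def)
    then have "compact {x. s \<le> f x}" using \<open>bounded {x. s \<le> f x}\<close> by (simp add: compact_eq_bounded_closed)
    then obtain Bf where Bf: "\<forall>x\<in>{x. s \<le> f x}. f x \<le> Bf" using usc_bounded_compact[OF fusc] by blast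
    have "f x \<le> max Bf s" for x using Bf by (cases "s \<le> f x") auto
    then show ?thesis using that by blast
  qed
  have amax: "\<alpha> \<le> Mf / W" if "P A \<alpha> a" for A \<alpha> a
  proof -
    have inv: "invertible A" and \<alpha>: "0 < \<alpha>" using that by (auto simp: P_def)
    have wy: "\<alpha> * w y \<le> Mf" for y
    proof -
      have "\<alpha> * w (A *v (matrix_inv A *v (y - a)) + a) \<le> f (matrix_inv A *v (y - a))"
        using that by (simp add: P_def)
      then show ?thesis using mvA_inv[OF inv] Mf[of "matrix_inv A *v (y - a)"] by simp
    qed
    have "W \<le> Mf / \<alpha>"
      unfolding W_def sup_norm_nonneg_eq[of w, OF w0]
    proof (rule cSUP_least)
      fix y show "w y \<le> Mf / \<alpha>" using wy[of y] \<alpha> by (simp add: field_simps mult.commute)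
    qed simp
    then show ?thesis using \<alpha> W0 by (simp add: field_simps mult.commute)
  qed
  define KB where "KB = d * (d * (4 * R / \<rho>))"
  have Bbound: "norm (matrix_inv A *v (y0 - a)) \<le> R \<and> norm (matrix_inv A) \<le> KB"
    if "P A \<alpha> a" "amin \<le> \<alpha>" for A \<alpha> a
  proof -
    have inv: "invertible A" using that by (simp add: P_def)
    define Bi where "Bi = matrix_inv A"
    define b where "b = Bi *v (y0 - a)"
    have xu: "norm (b + Bi *v u) \<le> R" if "norm u < \<rho>" for u
    proof -
      have "A *v (Bi *v (y0 + u - a)) + a = y0 + u" using mvA_inv[OF inv] by (simp add: Bi_def)
      moreover have "y0 + u \<in> ball y0 \<rho>" using that by (simp add: dist_norm)
      ultimately have "s \<le> f (Bi *v (y0 + u - a))" using lev[OF \<open>P A \<alpha> a\<close> \<open>amin \<le> \<alpha>\<close>] by simp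
      then have "norm (Bi *v (y0 + u - a)) \<le> R" by (rule R)
      moreover have "Bi *v (y0 + u - a) = b + Bi *v u"
        by (simp add: b_def algebra_simps)
      ultimately show ?thesis by simp
    qed
    have nb: "norm b \<le> R" using xu[of 0] y0 by simp
    have nBu: "norm (Bi *v u) \<le> 2 * R" if "norm u < \<rho>" for u
    proof -
      have "norm (Bi *v u) \<le> norm (b + Bi *v u) + norm b"
        by (metis add_diff_cancel_left' norm_triangle_ineq4 add.commute)
      then show ?thesis using xu[OF that] nb by simp
    qed
    have ent: "\<bar>Bi $ i $ j\<bar> \<le> 4 * R / \<rho>" for i j
    proof -
      define u where "u = (\<rho> / 2) *\<^sub>R (axis j 1 :: real^'n)"
      have nu: "norm u < \<rho>" using y0 by (simp add: u_def)
      have "(Bi *v u) $ i = (\<rho> / 2) * Bi $ i $ j"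
        by (simp add: u_def matrix_vector_mult_scaleR matrix_vector_mult_basis column_def)
      then have "\<bar>(\<rho> / 2) * Bi $ i $ j\<bar> \<le> 2 * R"
        using component_le_norm_cart[of "Bi *v u" i] nBu[OF nu] by simp
      then have "(\<rho> / 2) * \<bar>Bi $ i $ j\<bar> \<le> 2 * R" using y0 by (simp add: abs_mult)
      then show ?thesis using y0 by (simp add: field_simps)
    qed
    have "norm Bi \<le> real CARD('n) * (real CARD('n) * (4 * R / \<rho>))"
      by (rule norm_matrix_bound) (rule ent)
    then show ?thesis using nb by (simp add: KB_def d_def Bi_def b_def)
  qed
  define V where "V = {\<alpha> / cdet A | A \<alpha> a. P A \<alpha> a}"
  have Vle: "\<alpha> / cdet A \<le> integral UNIV f / integral UNIV w" if "P A \<alpha> a" for A \<alpha> a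
  proof -
    have inv: "invertible A" using that by (simp add: P_def)
    have "\<alpha> * integral UNIV w / cdet A \<le> integral UNIV f"
      using has_integral_le[OF pos_integral[OF pw inv, of \<alpha> a] integrable_integral[OF fint]] that
      by (simp add: P_def)
    then show ?thesis using Iw by (simp add: field_simps)
  qed
  have Vbdd: "bdd_above V"
    unfolding V_def using Vle by (intro bdd_aboveI[where M="integral UNIV f / integral UNIV w"]) blast
  have Vne: "V \<noteq> {}" using p1 by (auto simp: V_def)
  define S where "S = Sup V"
  have VS: "\<alpha> / cdet A \<le> S" if "P A \<alpha> a" for A \<alpha> a
    using that Vbdd by (auto simp: S_def V_def intro!: cSup_upper)
  have S0: "0 < S"
  proof -
    have "0 < \<alpha>1 / cdet A1" using p1 invertible_iff_cdet[of A1] by (simp add: P_def cdet_def)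
    then show ?thesis using VS[OF p1(1)] by linarith
  qed
  have "\<forall>k::nat. \<exists>T. P (fst T) (fst (snd T)) (snd (snd T)) \<and> amin \<le> fst (snd T) \<and>
          S - inverse (real (Suc k)) < fst (snd T) / cdet (fst T)"
  proof
    fix k :: nat
    have "S - inverse (real (Suc k)) < S" by simp
    then obtain v where "v \<in> V" "S - inverse (real (Suc k)) < v"
      using less_cSup_iff[OF Vne Vbdd] by (auto simp: S_def)
    then obtain A \<alpha> a where "P A \<alpha> a" "S - inverse (real (Suc k)) < \<alpha> / cdet A" by (auto simp: V_def)
    then obtain A' \<alpha>' a' where "P A' \<alpha>' a'" "amin \<le> \<alpha>'" "S - inverse (real (Suc k)) < \<alpha>' / cdet A'"
      using normal by fastforce
    then show "\<exists>T. P (fst T) (fst (snd T)) (snd (snd T)) \<and> amin \<le> fst (snd T) \<and>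
          S - inverse (real (Suc k)) < fst (snd T) / cdet (fst T)"
      by (intro exI[of _ "(A', \<alpha>', a')"]) simp
  qed
  then obtain T where T: "\<And>k. P (fst (T k)) (fst (snd (T k))) (snd (snd (T k)))"
     "\<And>k. amin \<le> fst (snd (T k))"
     "\<And>k. S - inverse (real (Suc k)) < fst (snd (T k)) / cdet (fst (T k))"
    by metis
  define Ak where "Ak k = fst (T k)" for k
  define ak where "ak k = snd (snd (T k))" for k
  define \<alpha>k where "\<alpha>k k = fst (snd (T k))" for k
  define Bk where "Bk k = matrix_inv (Ak k)" for k
  define bk where "bk k = Bk k *v (y0 - ak k)" for k
  have Pk: "P (Ak k) (\<alpha>k k) (ak k)" for k using T(1) by (simp add: Ak_def ak_def \<alpha>k_def)
  have invk: "invertible (Ak k)" for k using Pk by (simp add: P_def)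
  define X where "X k = (Bk k, bk k, \<alpha>k k)" for k
  define K where "K = cball (0::real^'n^'n) KB \<times> cball (0::real^'n) R \<times> {amin .. Mf / W}"
  have XK: "\<forall>k. X k \<in> K"
  proof
    fix k
    have "norm (bk k) \<le> R \<and> norm (Bk k) \<le> KB"
      using Bbound[OF Pk T(2)[of k, folded \<alpha>k_def]] by (simp add: bk_def Bk_def)
    moreover have "\<alpha>k k \<le> Mf / W" using amax[OF Pk] .
    ultimately show "X k \<in> K" using T(2)[of k] by (simp add: X_def K_def \<alpha>k_def)
  qed
  have "compact K" unfolding K_def by (intro compact_Times compact_cball compact_Icc)
  then obtain l r where l: "l \<in> K" "strict_mono r" "(X \<circ> r) \<longlonglongrightarrow> l"
    using seq_compactE[OF compact_imp_seq_compact] XK by metis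
  define B where "B = fst l"
  define b where "b = fst (snd l)"
  define \<alpha> where "\<alpha> = snd (snd l)"
  have Bl: "(\<lambda>k. Bk (r k)) \<longlonglongrightarrow> B"
    using tendsto_fst[OF l(3)] by (simp add: X_def B_def o_def)
  have bl: "(\<lambda>k. bk (r k)) \<longlonglongrightarrow> b"
    using tendsto_fst[OF tendsto_snd[OF l(3)]] by (simp add: X_def b_def o_def)
  have \<alpha>l: "(\<lambda>k. \<alpha>k (r k)) \<longlonglongrightarrow> \<alpha>"
    using tendsto_snd[OF tendsto_snd[OF l(3)]] by (simp add: X_def \<alpha>_def o_def)
  have \<alpha>0: "amin \<le> \<alpha>" using l(1) by (auto simp: K_def \<alpha>_def)
  have SB: "S = \<alpha> * cdet B"
  proof -
    define val where "val k = \<alpha>k k / cdet (Ak k)" for k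
    have valB: "val k = \<alpha>k k * cdet (Bk k)" for k
    proof -
      have e: "cdet (Ak k) * cdet (Bk k) = 1" using cdet_inv[OF invk] by (simp add: Bk_def)
      have ne: "cdet (Ak k) \<noteq> 0" using invertible_iff_cdet invk by blast
      have "cdet (Bk k) = 1 / cdet (Ak k)" using e ne by (simp add: eq_divide_eq mult.commute)
      then show ?thesis by (simp add: val_def)
    qed
    have lo: "(\<lambda>k. S - inverse (real (Suc k))) \<longlonglongrightarrow> S"
      using tendsto_diff[OF tendsto_const LIMSEQ_inverse_real_of_nat, of S] by simp
    have "val \<longlonglongrightarrow> S"
    proof (rule tendsto_sandwich[OF _ _ lo tendsto_const])
      show "\<forall>\<^sub>F k in sequentially. S - inverse (real (Suc k)) \<le> val k"
        using T(3) by (auto simp: val_def Ak_def \<alpha>k_def less_imp_le)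
      show "\<forall>\<^sub>F k in sequentially. val k \<le> S"
        using VS[OF Pk] by (auto simp: val_def)
    qed
    then have "(val \<circ> r) \<longlonglongrightarrow> S" using l(2) by (rule LIMSEQ_subseq_LIMSEQ)
    moreover have "(val \<circ> r) \<longlonglongrightarrow> \<alpha> * cdet B"
      unfolding o_def valB by (intro tendsto_mult \<alpha>l tendsto_cdet Bl)
    ultimately show ?thesis by (rule LIMSEQ_unique)
  qed
  have invB: "invertible B"
  proof -
    have "0 < \<alpha>" using \<alpha>0 amin0 by linarith
    then have "cdet B \<noteq> 0" using SB S0 by auto
    then show ?thesis by (simp add: invertible_iff_cdet)
  qed
  define A0 where "A0 = matrix_inv B"
  define a0 where "a0 = y0 - A0 *v b"
  have invA0: "invertible A0" using invB by (simp add: A0_def minv_invertible)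
  have feas0: "\<alpha> * w (A0 *v x + a0) \<le> f x" for x
  proof -
    define y where "y = A0 *v x + a0"
    define xk where "xk k = Bk (r k) *v (y - y0) + bk (r k)" for k
    have xky: "Ak (r k) *v xk k + ak (r k) = y" for k
    proof -
      have "Ak (r k) *v xk k = (y - y0) + Ak (r k) *v bk (r k)"
        using mvA_inv[OF invk] by (simp add: xk_def Bk_def matrix_vector_right_distrib)
      also have "Ak (r k) *v bk (r k) = y0 - ak (r k)"
        using mvA_inv[OF invk] by (simp add: bk_def Bk_def)
      finally show ?thesis by simp
    qed
    have le: "\<alpha>k (r k) * w y \<le> f (xk k)" for k
      using Pk[of "r k"] xky[of k] by (auto simp: P_def)
    have "xk \<longlonglongrightarrow> B *v (y - y0) + b"
      unfolding xk_def by (intro tendsto_add tendsto_mv Bl bl)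
    moreover have "B *v (y - y0) + b = x"
    proof -
      have "y - y0 = A0 *v (x - b)" by (simp add: y_def a0_def matrix_vector_mult_diff_distrib)
      then show ?thesis using mvA_inv[OF invB] by (simp add: A0_def)
    qed
    ultimately have xl: "xk \<longlonglongrightarrow> x" by simp
    have "\<alpha> * w y \<le> f x"
    proof (rule dense_le)
      fix c assume c: "c < \<alpha> * w y"
      have "(\<lambda>k. \<alpha>k (r k) * w y) \<longlonglongrightarrow> \<alpha> * w y" by (intro tendsto_mult \<alpha>l tendsto_const)
      then have "\<forall>\<^sub>F k in sequentially. c < \<alpha>k (r k) * w y" using c by (rule order_tendstoD)
      then have "\<forall>\<^sub>F k in sequentially. c \<le> f (xk k)"
        by eventually_elim (use le in \<open>smt (verit)\<close>)
      then show "c \<le> f x" by (rule usc_limit[OF fusc xl])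
    qed
    then show ?thesis by (simp add: y_def)
  qed
  have val0: "\<alpha> / cdet A0 = S"
  proof -
    have e: "cdet B * cdet A0 = 1" using cdet_inv[OF invB] by (simp add: A0_def)
    have ne: "cdet A0 \<noteq> 0" using invertible_iff_cdet invA0 by blast
    have "cdet B = 1 / cdet A0" using e ne by (simp add: eq_divide_eq)
    then show ?thesis using SB by simp
  qed
  show ?thesis
  proof (intro exI conjI allI impI)
    show "invertible A0" by (rule invA0)
    show "0 < \<alpha>" using \<alpha>0 amin0 by linarith
    show "\<alpha> * w (A0 *v x + a0) \<le> f x" for x by (rule feas0)
    show "\<alpha>' / cdet A' \<le> \<alpha> / cdet A0"
      if "invertible A' \<and> 0 < \<alpha>' \<and> (\<forall>x. \<alpha>' * w (A' *v x + a') \<le> f x)" for A' \<alpha>' a'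
      using VS[of A' \<alpha>' a'] that val0 by (simp add: P_def)
    show "bdd_above (range f)" using Mf by (intro bdd_aboveI2[where M=Mf])
  qed
qed



theorem lemma2p5:
  fixes f w :: "real^'n \<Rightarrow> real"
  assumes "proper_log_concave f" and "proper_log_concave w"
    and "bounded (support_of w)"
  shows "\<exists>g0 \<in> positions w. (\<forall>x. g0 x \<le> f x) \<and>
           (\<forall>g \<in> positions w. (\<forall>x. g x \<le> f x) \<longrightarrow> integral UNIV g \<le> integral UNIV g0) \<and>
           sup_norm g0 \<le> sup_norm f \<and>
           sup_norm f \<le> exp (real CARD('n)) * sup_norm g0"
proof -
  note pf = assms(1) and pw = assms(2) and bw = assms(3)
  obtain A0 \<alpha>0 a0 where inv0: "invertible A0" and pos0: "0 < \<alpha>0"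
    and feas0: "\<forall>x. \<alpha>0 * w (A0 *v x + a0) \<le> f x"
    and opt: "\<forall>A \<alpha> a. invertible A \<and> 0 < \<alpha> \<and> (\<forall>x. \<alpha> * w (A *v x + a) \<le> f x) \<longrightarrow> \<alpha> / cdet A \<le> \<alpha>0 / cdet A0"
    and bddf: "bdd_above (range f)"
    using main_exists[OF pf pw bw] by blast
  have f0: "\<And>x. 0 \<le> f x" and w0: "\<And>x. 0 \<le> w x"
    using pf pw by (auto simp: proper_log_concave_def log_concave_def)
  have flc: "log_concave f" using pf by (simp add: proper_log_concave_def)
  have Iw: "0 < integral UNIV w" using pw by (simp add: proper_log_concave_def)
  define W where "W = sup_norm w"
  have Wle: "\<And>y. w y \<le> W" and W0: "0 < W" using W_props[OF pw bw] by (auto simp: W_def)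
  have bddw: "bdd_above (range w)" by (rule w_bdd[OF pw bw])
  define g0 where "g0 = (\<lambda>x. \<alpha>0 * w (A0 *v x + a0))"
  have g0pos: "g0 \<in> positions w" unfolding positions_def g0_def using inv0 pos0 by blast
  have sg0: "sup_norm g0 = \<alpha>0 * W"
    unfolding g0_def W_def by (rule sup_norm_pos[OF w0 bddw inv0 pos0])
  have ig0: "integral UNIV g0 = \<alpha>0 * integral UNIV w / cdet A0"
    unfolding g0_def by (rule integral_unique[OF pos_integral[OF pw inv0]])
  have sf: "sup_norm f = Sup (range f)" by (rule sup_norm_nonneg_eq[OF f0])
  show ?thesis
  proof (intro bexI[OF _ g0pos] conjI ballI impI allI)
    show "g0 x \<le> f x" for x using feas0 by (simp add: g0_def)
  next
    fix g assume g: "g \<in> positions w" "\<forall>x. g x \<le> f x"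
    then obtain A \<alpha> a where ga: "g = (\<lambda>x. \<alpha> * w (A *v x + a))" "invertible A" "0 < \<alpha>"
      by (auto simp: positions_def)
    have "\<alpha> / cdet A \<le> \<alpha>0 / cdet A0" using opt ga g(2) by blast
    then have "\<alpha> / cdet A * integral UNIV w \<le> \<alpha>0 / cdet A0 * integral UNIV w"
      using Iw by (intro mult_right_mono) auto
    moreover have "integral UNIV g = \<alpha> * integral UNIV w / cdet A"
      unfolding ga(1) by (rule integral_unique[OF pos_integral[OF pw ga(2)]])
    ultimately show "integral UNIV g \<le> integral UNIV g0" using ig0 by simp
  next
    have "\<alpha>0 * W \<le> Sup (range f)"
    proof -
      have "g0 x \<le> Sup (range f)" for x
        using feas0 cSUP_upper[OF UNIV_I bddf, of x] by (simp add: g0_def) (smt (verit))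
      then have "Sup (range g0) \<le> Sup (range f)" by (intro cSUP_least) auto
      moreover have "sup_norm g0 = Sup (range g0)"
        by (rule sup_norm_nonneg_eq) (simp add: g0_def w0 pos0 less_imp_le)
      ultimately show ?thesis using sg0 by simp
    qed
    then show "sup_norm g0 \<le> sup_norm f" using sg0 sf by simp
  next
    show "sup_norm f \<le> exp (real CARD('n)) * sup_norm g0"
    proof (rule ccontr)
      assume "\<not> ?thesis"
      then have "exp (real CARD('n)) * (\<alpha>0 * W) < Sup (range f)" using sg0 sf by simp
      then obtain xz where xz: "exp (real CARD('n)) * (\<alpha>0 * W) < f xz"
        using less_cSUP_iff[of UNIV f] bddf by auto
      have fe: "\<And>x. \<alpha>0 * w (A0 *v x + a0) \<le> f x" using feas0 by blast
      obtain A' \<alpha>' a' where imp: "invertible A'" "0 < \<alpha>'" "\<forall>x. \<alpha>' * w (A' *v x + a') \<le> f x"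
        "\<alpha>0 / cdet A0 < \<alpha>' / cdet A'"
        using improve[where f=f and w=w and W=W and A=A0 and \<alpha>=\<alpha>0 and a=a0 and xz=xz,
            OF flc w0 Wle W0 inv0 pos0 fe xz] by blast
      have "\<alpha>' / cdet A' \<le> \<alpha>0 / cdet A0" using opt imp by blast
      then show False using imp(4) by simp
    qed
  qed
qed

end
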